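(* Let $R$ be a CSNC ring. Then $2\in\mathrm{Nil}(R)$ and $J(R)\subseteq\mathrm{Nil}(R)$ (i.e. the Jacobson radical $J(R)$ is nil).
   Context: All rings are associative with identity $1$. For a ring $R$, $\mathrm{Id}(R)$, $U(R)$, $\mathrm{Nil}(R)$ denote the sets of idempotents, units and nilpotent elements, and $J(R)$ the Jacobson radical. An element $a\in R$ is clean if $a=e+u$ for some $e\in\mathrm{Id}(R)$, $u\in U(R)$. An element $a$ is strongly nil-clean if $a=e+q$ with $e\in \mathrm{Id}(R)$, $q\in\mathrm{Nil}(R)$ and $eq=qe$. A ring $R$ is called CSNC if every clean element of $R$ is strongly nil-clean. *)

theory Defs
  imports Main
begin

definition idempotents :: "'a::ring_1 set" where
  "idempotents = {e. e * e = e}"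

definition units_of_ring :: "'a::ring_1 set" where
  "units_of_ring = {u. \<exists>v. u * v = 1 \<and> v * u = 1}"

definition nilpotents :: "'a::ring_1 set" where
  "nilpotents = {q. \<exists>n::nat. q ^ n = 0}"

definition is_clean :: "'a::ring_1 \<Rightarrow> bool" where
  "is_clean a \<longleftrightarrow> (\<exists>e u. e \<in> idempotents \<and> u \<in> units_of_ring \<and> a = e + u)"

definition strongly_nil_clean :: "'a::ring_1 \<Rightarrow> bool" where
  "strongly_nil_clean a \<longleftrightarrow>
     (\<exists>e q. e \<in> idempotents \<and> q \<in> nilpotents \<and> e * q = q * e \<and> a = e + q)"

definition CSNC :: "'a::ring_1 itself \<Rightarrow> bool" where
  "CSNC _ \<longleftrightarrow> (\<forall>a::'a. is_clean a \<longrightarrow> strongly_nil_clean a)"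

definition left_ideal :: "'a::ring_1 set \<Rightarrow> bool" where
  "left_ideal I \<longleftrightarrow> 0 \<in> I \<and> (\<forall>x\<in>I. \<forall>y\<in>I. x + y \<in> I) \<and> (\<forall>x\<in>I. - x \<in> I)
     \<and> (\<forall>r. \<forall>x\<in>I. r * x \<in> I)"

definition maximal_left_ideal :: "'a::ring_1 set \<Rightarrow> bool" where
  "maximal_left_ideal M \<longleftrightarrow> left_ideal M \<and> M \<noteq> UNIV \<and>
     (\<forall>I. left_ideal I \<and> M \<subseteq> I \<longrightarrow> I = M \<or> I = UNIV)"

definition jacobson_radical :: "'a::ring_1 set" where
  "jacobson_radical = \<Inter> {M. maximal_left_ideal M}"

end

theory Submission
  imports Defs
begin

lemma unit_snc_eq_one:
  fixes u :: "'a::ring_1"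
  assumes u: "u \<in> units_of_ring" and s: "strongly_nil_clean u"
  shows "u - 1 \<in> nilpotents"
proof -
  obtain v where uv: "u * v = 1" "v * u = 1" using u by (auto simp: units_of_ring_def)
  obtain e q where e: "e * e = e" and qn: "\<exists>n::nat. q ^ n = 0" and eq: "e * q = q * e" and ueq: "u = e + q"
    using s by (auto simp: strongly_nil_clean_def idempotents_def nilpotents_def)
  define f where "f = 1 - e"
  have uq: "u * q = q * u" using eq by (simp add: ueq algebra_simps)
  have qv: "q * v = v * q"
  proof -
    have "q * v = v * u * q * v" using uv by simp
    also have "\<dots> = v * (u * q) * v" by (simp add: mult.assoc)
    also have "\<dots> = v * q * (u * v)" using uq by (simp add: mult.assoc)
    finally show ?thesis using uv by simp
  qed
  have fq: "f * q = q * f" using eq by (simp add: f_def algebra_simps)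
  have fu: "f * u = f * q" using e by (simp add: f_def ueq algebra_simps)
  have f1: "f = q * f * v"
  proof -
    have "f = f * u * v" using uv by (simp add: mult.assoc)
    also have "\<dots> = q * f * v" using fu fq by simp
    finally show ?thesis .
  qed
  have fn: "f = q ^ n * f * v ^ n" for n
  proof (induction n)
    case 0 show ?case by simp
  next
    case (Suc n)
    have "f = q ^ n * (q * f * v) * v ^ n" using Suc f1 by simp
    also have "\<dots> = (q ^ n * q) * f * (v * v ^ n)" by (simp only: mult.assoc)
    also have "\<dots> = q ^ Suc n * f * v ^ Suc n" by (simp only: power_Suc2[of q n] power_Suc[of v n])
    finally show ?case .
  qed
  obtain n where "q ^ n = 0" using qn by blast
  with fn[of n] have "f = 0" by simp
  hence "e = 1" by (simp add: f_def)
  hence "u - 1 = q" by (simp add: ueq)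
  thus ?thesis using qn by (simp add: nilpotents_def)
qed

lemma CSNC_unit:
  fixes u :: "'a::ring_1"
  assumes "CSNC TYPE('a)" "u \<in> units_of_ring"
  shows "u - 1 \<in> nilpotents"
proof -
  have "is_clean u" unfolding is_clean_def
    by (rule exI[of _ 0], rule exI[of _ u]) (simp add: idempotents_def assms)
  with assms show ?thesis by (intro unit_snc_eq_one) (auto simp: CSNC_def)
qed

lemma one_in_left_ideal:
  fixes I :: "'a::ring_1 set"
  assumes "left_ideal I" "1 \<in> I" shows "I = UNIV"
proof -
  have "r * 1 \<in> I" for r using assms unfolding left_ideal_def by blast
  thus ?thesis by auto
qed

lemma maximal_exists:
  fixes L :: "'a::ring_1 set"
  assumes L: "left_ideal L" "1 \<notin> L"
  shows "\<exists>M. maximal_left_ideal M \<and> L \<subseteq> M"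
proof -
  define A where "A = {I. left_ideal I \<and> L \<subseteq> I \<and> (1::'a) \<notin> I}"
  have "A \<noteq> {}" using L by (auto simp: A_def)
  moreover have "\<Union>C \<in> A" if C: "C \<noteq> {}" "subset.chain A C" for C
  proof -
    have CA: "C \<subseteq> A" and ch: "\<forall>X\<in>C. \<forall>Y\<in>C. X \<subseteq> Y \<or> Y \<subseteq> X"
      using C(2) by (auto simp: subset_chain_def)
    obtain X0 where X0: "X0 \<in> C" using C(1) by blast
    have li: "left_ideal X" if "X \<in> C" for X using CA that by (auto simp: A_def)
    have "left_ideal (\<Union>C)" unfolding left_ideal_def
    proof (intro conjI ballI allI)
      show "0 \<in> \<Union>C" using X0 li[OF X0] by (auto simp: left_ideal_def)
    next
      fix x y assume "x \<in> \<Union>C" "y \<in> \<Union>C"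
      then obtain X Y where XY: "X \<in> C" "Y \<in> C" "x \<in> X" "y \<in> Y" by blast
      show "x + y \<in> \<Union>C"
      proof (cases "X \<subseteq> Y")
        case True thus ?thesis using XY li[of Y] by (auto simp: left_ideal_def)
      next
        case False hence "Y \<subseteq> X" using ch XY by blast
        thus ?thesis using XY li[of X] by (auto simp: left_ideal_def)
      qed
    next
      fix x assume "x \<in> \<Union>C"
      then obtain X where "X \<in> C" "x \<in> X" by blast
      thus "- x \<in> \<Union>C" using li[of X] by (auto simp: left_ideal_def)
    next
      fix r x assume "x \<in> \<Union>C"
      then obtain X where "X \<in> C" "x \<in> X" by blast
      thus "r * x \<in> \<Union>C" using li[of X] unfolding left_ideal_def by blast
    qed
    moreover have "L \<subseteq> \<Union>C" using X0 CA by (auto simp: A_def)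
    moreover have "1 \<notin> \<Union>C" using CA by (auto simp: A_def)
    ultimately show ?thesis by (simp add: A_def)
  qed
  ultimately obtain M where M: "M \<in> A" "\<forall>X\<in>A. M \<subseteq> X \<longrightarrow> X = M"
    using subset_Zorn_nonempty[of A] by blast
  have "maximal_left_ideal M" unfolding maximal_left_ideal_def
  proof (intro conjI allI impI)
    show "left_ideal M" using M by (auto simp: A_def)
    show "M \<noteq> UNIV" using M by (auto simp: A_def)
  next
    fix I assume I: "left_ideal I \<and> M \<subseteq> I"
    show "I = M \<or> I = UNIV"
    proof (cases "1 \<in> I")
      case True thus ?thesis using one_in_left_ideal I by blast
    next
      case False
      hence "I \<in> A" using I M(1) by (auto simp: A_def)
      thus ?thesis using M(2) I by blast
    qed
  qed
  thus ?thesis using M(1) by (auto simp: A_def)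
qed

lemma jac_left_ideal:
  fixes j :: "'a::ring_1"
  assumes "j \<in> jacobson_radical" shows "r * j \<in> jacobson_radical"
  unfolding jacobson_radical_def
proof (rule InterI)
  fix M :: "'a set" assume "M \<in> {M. maximal_left_ideal M}"
  hence M: "left_ideal M" by (simp add: maximal_left_ideal_def)
  have "j \<in> M" using assms \<open>M \<in> _\<close> by (simp add: jacobson_radical_def)
  thus "r * j \<in> M" using M unfolding left_ideal_def by blast
qed

lemma jac_left_inv:
  fixes j :: "'a::ring_1"
  assumes j: "j \<in> jacobson_radical" shows "\<exists>a. a * (1 + j) = 1"
proof (rule ccontr)
  assume na: "\<not> ?thesis"
  define L where "L = {r * (1 + j) | r. True}"
  have "left_ideal L" unfolding left_ideal_def L_def
  proof (intro conjI ballI allI)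
    show "0 \<in> {r * (1 + j) |r. True}" by (rule CollectI, rule exI[of _ 0]) simp
  next
    fix x y assume "x \<in> {r * (1 + j) |r. True}" "y \<in> {r * (1 + j) |r. True}"
    then obtain a b where "x = a * (1 + j)" "y = b * (1 + j)" by blast
    thus "x + y \<in> {r * (1 + j) |r. True}" by (intro CollectI exI[of _ "a + b"]) (simp add: distrib_right)
  next
    fix x assume "x \<in> {r * (1 + j) |r. True}"
    then obtain a where "x = a * (1 + j)" by blast
    thus "- x \<in> {r * (1 + j) |r. True}" by (intro CollectI exI[of _ "- a"]) simp
  next
    fix r x assume "x \<in> {r * (1 + j) |r. True}"
    then obtain a where "x = a * (1 + j)" by blast
    thus "r * x \<in> {r * (1 + j) |r. True}" by (intro CollectI exI[of _ "r * a"]) (simp add: mult.assoc)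
  qed
  moreover have "1 \<notin> L" using na by (auto simp: L_def)
  ultimately obtain M where M: "maximal_left_ideal M" "L \<subseteq> M" using maximal_exists by blast
  have "1 * (1 + j) \<in> L" unfolding L_def by blast
  hence "1 + j \<in> M" using M(2) by auto
  moreover have "j \<in> M" using j M(1) by (auto simp: jacobson_radical_def)
  moreover have "left_ideal M" using M(1) by (simp add: maximal_left_ideal_def)
  ultimately have "(1 + j) + - j \<in> M" unfolding left_ideal_def by blast
  hence "1 \<in> M" by simp
  thus False using M(1) one_in_left_ideal unfolding maximal_left_ideal_def by blast
qed

lemma jac_unit:
  fixes j :: "'a::ring_1"
  assumes j: "j \<in> jacobson_radical" shows "1 + j \<in> units_of_ring"
proof -
  obtain a where a: "a * (1 + j) = 1" using jac_left_inv[OF j] by blast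
  have "a = a * (1 + j) - a * j" by (simp add: distrib_left)
  hence aeq: "a = 1 + (- (a * j))" using a by simp
  have "(- a) * j \<in> jacobson_radical" by (rule jac_left_ideal[OF j])
  hence "- (a * j) \<in> jacobson_radical" by simp
  then obtain b where b0: "b * (1 + (- (a * j))) = 1" using jac_left_inv by blast
  have b: "b * a = 1" using b0 aeq by simp
  have "b = b * (a * (1 + j))" using a by simp
  also have "\<dots> = 1 + j" using b by (simp add: mult.assoc[symmetric])
  finally have "(1 + j) * a = 1" using b by simp
  with a show ?thesis by (auto simp: units_of_ring_def)
qed

theorem proposition2p3:
  assumes "CSNC TYPE('a::ring_1)"
  shows "(2::'a) \<in> nilpotents \<and> (jacobson_radical :: 'a set) \<subseteq> nilpotents"
proof
  have "(-1::'a) \<in> units_of_ring" by (auto simp: units_of_ring_def intro!: exI[of _ "-1"])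
  from CSNC_unit[OF assms this] obtain n where "(-1 - 1::'a) ^ n = 0"
    by (auto simp: nilpotents_def)
  have m2: "(-1 - 1::'a) = - 2" by simp
  have "(2::'a) ^ n = (- (-1 - 1::'a)) ^ n" by (simp only: m2 minus_minus)
  also have "\<dots> = (-1) ^ n * (-1 - 1::'a) ^ n" by (rule power_minus)
  also have "\<dots> = 0" using \<open>(-1 - 1::'a) ^ n = 0\<close> by simp
  finally have "(2::'a) ^ n = 0" .
  thus "(2::'a) \<in> nilpotents" by (auto simp: nilpotents_def)
next
  show "(jacobson_radical :: 'a set) \<subseteq> nilpotents"
  proof
    fix j :: 'a assume "j \<in> jacobson_radical"
    from CSNC_unit[OF assms jac_unit[OF this]] show "j \<in> nilpotents" by simp
  qed
qed

end
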